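(* Let $r\ge 2$ and $m$ be integers with $0\le 2m\le r$, and let $M_m\subseteq\mathbb{P}S^r(\mathbb{C}^2)=\mathbb{P}^r$ be the variety defined in the context. Then $\dim(M_m)<2m$. In particular, if $m=0$ then $M_m=\emptyset$.
   Context: $S^r(\mathbb{C}^2)$ is the irreducible $\mathfrak{sl}_2(\mathbb{C})$-module (equivalently $PGL_2$/$SL_2(\mathbb{C})$-module) of binary forms of degree $r$, and $S^2(S^r(\mathbb{C}^2))\cong\bigoplus_{m'\ge 0,\ 4m'\le 2r}S^{2r-4m'}(\mathbb{C}^2)$ as $\mathfrak{sl}_2(\mathbb{C})$-modules. Let $f_m:S^2(S^r(\mathbb{C}^2))\to S^{2r-4m}(\mathbb{C}^2)$ be the (nonzero, $\mathfrak{sl}_2(\mathbb{C})$-equivariant) projection onto the summand $S^{2r-4m}(\mathbb{C}^2)$, and $M_m=\{[x]\in\mathbb{P}S^r(\mathbb{C}^2): f_m(xx)=0\}$, the projective variety cut out by the $2r-4m+1$ quadrics given by the coordinates of $f_m(xx)$. The empty set has dimension $-1$ (or $-\infty$). *)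

theory Defs
  imports Complex_Main "HOL-Library.Extended_Real"
begin

(* Binary forms of degree r: x = sum_{i=0..r} a i * X^(r-i) * Y^i, represented by the
   coefficient vector a :: nat => complex with a i = 0 for i > r  (so S^r(C^2) = C^(r+1)). *)
definition bform_space :: "nat \<Rightarrow> (nat \<Rightarrow> complex) set" where
  "bform_space r = {a. \<forall>i>r. a i = 0}"

(* falling factorial n(n-1)...(n-k+1); it is 0 when k > n *)
definition ff :: "nat \<Rightarrow> nat \<Rightarrow> nat" where
  "ff n k = (\<Prod>t<k. n - t)"

(* Coefficient of X^(2r-4m-k) Y^k in the 2m-th transvectant (x,x)_{2m}
     = sum_{j=0}^{2m} (-1)^j C(2m,j) (d_X^(2m-j) d_Y^j x) (d_X^j d_Y^(2m-j) x),
   which is (up to a nonzero scalar) the sl_2-equivariant projection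
   f_m : S^2(S^r C^2) -> S^(2r-4m) C^2 evaluated at x x. *)
definition transv :: "nat \<Rightarrow> nat \<Rightarrow> (nat \<Rightarrow> complex) \<Rightarrow> nat \<Rightarrow> complex" where
  "transv r m a k =
     (\<Sum>j\<le>2*m. \<Sum>i\<le>r. \<Sum>l\<le>r.
        if i + l = k + 2*m then
          (-1)^j * of_nat (2*m choose j)
          * of_nat (ff (r-i) (2*m-j) * ff i j * ff (r-l) j * ff l (2*m-j)) * a i * a l
        else 0)"

(* affine cone over M_m in C^(r+1) *)
definition Mcone :: "nat \<Rightarrow> nat \<Rightarrow> (nat \<Rightarrow> complex) set" where
  "Mcone r m = {a \<in> bform_space r. \<forall>k\<le>2*r-4*m. transv r m a k = 0}"

(* nonzero representatives of the points of M_m in P S^r(C^2) *)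
definition Mpts :: "nat \<Rightarrow> nat \<Rightarrow> (nat \<Rightarrow> complex) set" where
  "Mpts r m = {a \<in> Mcone r m. a \<noteq> (\<lambda>_. 0)}"

inductive_set poly_fun :: "((nat \<Rightarrow> complex) \<Rightarrow> complex) set" where
  pf_const: "(\<lambda>_. c) \<in> poly_fun"
| pf_var: "(\<lambda>a. a i) \<in> poly_fun"
| pf_add: "p \<in> poly_fun \<Longrightarrow> q \<in> poly_fun \<Longrightarrow> (\<lambda>a. p a + q a) \<in> poly_fun"
| pf_mult: "p \<in> poly_fun \<Longrightarrow> q \<in> poly_fun \<Longrightarrow> (\<lambda>a. p a * q a) \<in> poly_fun"

definition zar_closed :: "nat \<Rightarrow> (nat \<Rightarrow> complex) set \<Rightarrow> bool" where
  "zar_closed r Z \<longleftrightarrow> (\<exists>S \<subseteq> poly_fun. Z = {a \<in> bform_space r. \<forall>p\<in>S. p a = 0})"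

definition zar_irred :: "nat \<Rightarrow> (nat \<Rightarrow> complex) set \<Rightarrow> bool" where
  "zar_irred r Z \<longleftrightarrow> zar_closed r Z \<and> Z \<noteq> {} \<and>
     (\<forall>Z1 Z2. zar_closed r Z1 \<and> zar_closed r Z2 \<and> Z = Z1 \<union> Z2 \<longrightarrow> Z = Z1 \<or> Z = Z2)"

definition irred_chain :: "nat \<Rightarrow> (nat \<Rightarrow> complex) set \<Rightarrow> nat \<Rightarrow> bool" where
  "irred_chain r X k \<longleftrightarrow> (\<exists>Z :: nat \<Rightarrow> (nat \<Rightarrow> complex) set.
      (\<forall>i\<le>k. zar_irred r (Z i) \<and> Z i \<subseteq> X) \<and> (\<forall>i<k. Z i \<subset> Z (Suc i)))"

(* dimension of the projective variety whose affine cone is C: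
   (Krull dimension of the cone) - 1; the empty projective variety gets -1 *)
definition proj_dim :: "nat \<Rightarrow> (nat \<Rightarrow> complex) set \<Rightarrow> ereal" where
  "proj_dim r C = Sup ({-1} \<union> {ereal (real k) - 1 | k. irred_chain r C k})"

end

theory Submission
  imports Defs "HOL-Library.Function_Algebras" "HOL-Analysis.Derivative" "HOL-Computational_Algebra.Polynomial"
begin


lemma LA_bound:
  fixes g :: "'i \<Rightarrow> 'a \<Rightarrow> complex" and h :: "nat \<Rightarrow> 'a \<Rightarrow> complex"
  assumes fin: "finite I"
    and sp: "\<forall>j<n. \<exists>c. \<forall>x\<in>Z. h j x = (\<Sum>i\<in>I. c i * g i x)"
    and ind: "\<forall>d. (\<forall>x\<in>Z. (\<Sum>j<n. d j * h j x) = 0) \<longrightarrow> (\<forall>j<n. d j = 0)"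
  shows "n \<le> card I"
proof -
  interpret V: vector_space "\<lambda>(c::complex) (f::'a \<Rightarrow> complex) x. c * f x"
    by unfold_locales (auto simp: fun_eq_iff algebra_simps)
  define R where "R f = (\<lambda>x. if x \<in> Z then f x else 0)" for f :: "'a \<Rightarrow> complex"
  define H where "H = (\<lambda>j. R (h j)) ` {..<n}"
  define G where "G = (\<lambda>i. R (g i)) ` I"
  have sumR: "(\<Sum>v\<in>S. u v * f v x) = (\<Sum>v\<in>S. u v * f v x)" for S u f x by simp
  have sumfun: "(\<Sum>v\<in>S. F v) x = (\<Sum>v\<in>S. F v x)" if "finite S" for S and F :: "'b \<Rightarrow> 'a \<Rightarrow> complex" and x
    using that by (induction S rule: finite_induct) auto
  have injH: "inj_on (\<lambda>j. R (h j)) {..<n}"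
  proof (rule inj_onI, rule ccontr)
    fix j1 j2 assume j: "j1 \<in> {..<n}" "j2 \<in> {..<n}" "R (h j1) = R (h j2)" "j1 \<noteq> j2"
    define d where "d = (\<lambda>j. if j = j1 then (1::complex) else if j = j2 then -1 else 0)"
    have "\<forall>x\<in>Z. (\<Sum>j<n. d j * h j x) = 0"
    proof
      fix x assume x: "x \<in> Z"
      have e: "h j1 x = h j2 x" using j(3) x unfolding R_def by (metis)
      have "(\<Sum>j<n. d j * h j x) = (\<Sum>j\<in>{j1,j2}. d j * h j x)"
        by (rule sum.mono_neutral_right) (use j in \<open>auto simp: d_def\<close>)
      also have "\<dots> = 0" using j(4) e by (simp add: d_def)
      finally show "(\<Sum>j<n. d j * h j x) = 0" .
    qed
    with ind have "\<forall>j<n. d j = 0" by blast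
    then have "d j1 = 0" using j(1) by blast
    then show False by (simp add: d_def)
  qed
  have cardH: "card H = n" unfolding H_def using card_image[OF injH] by simp
  have cardG: "card G \<le> card I" unfolding G_def using card_image_le[OF fin] by simp
  have indH: "V.independent H"
  proof (rule V.independent_if_scalars_zero)
    show "finite H" unfolding H_def by simp
    fix f v assume s: "(\<Sum>x\<in>H. (\<lambda>y. f x * x y)) = 0" and v: "v \<in> H"
    define d where "d j = f (R (h j))" for j
    have "\<forall>x\<in>Z. (\<Sum>j<n. d j * h j x) = 0"
    proof
      fix x assume x: "x \<in> Z"
      have "(\<Sum>j<n. d j * h j x) = (\<Sum>j<n. f (R (h j)) * R (h j) x)"
        using x by (simp add: d_def R_def)
      also have "\<dots> = (\<Sum>w\<in>H. f w * w x)"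
        unfolding H_def by (subst sum.reindex[OF injH]) simp
      also have "\<dots> = (\<Sum>w\<in>H. (\<lambda>y. f w * w y)) x"
        by (subst sumfun) (auto simp: H_def)
      also have "\<dots> = 0" using s by simp
      finally show "(\<Sum>j<n. d j * h j x) = 0" .
    qed
    with ind have "\<forall>j<n. d j = 0" by blast
    then show "f v = 0" using v unfolding H_def d_def by auto
  qed
  have HG: "H \<subseteq> V.span G"
  proof
    fix w assume "w \<in> H"
    then obtain j where j: "j < n" "w = R (h j)" unfolding H_def by auto
    from sp j obtain c where c: "\<forall>x\<in>Z. h j x = (\<Sum>i\<in>I. c i * g i x)" by blast
    have "(\<Sum>i\<in>I. (\<lambda>x. c i * R (g i) x)) \<in> V.span G"
    proof (rule V.span_sum)
      fix i assume "i \<in> I"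
      then have "R (g i) \<in> G" by (auto simp: G_def)
      from V.span_scale[OF V.span_base[OF this], of "c i"]
      show "(\<lambda>x. c i * R (g i) x) \<in> V.span G" by simp
    qed
    moreover have "(\<Sum>i\<in>I. (\<lambda>x. c i * R (g i) x)) = w"
      using c j fin by (auto simp: fun_eq_iff sumfun R_def)
    ultimately show "w \<in> V.span G" by simp
  qed
  have "finite G" unfolding G_def using fin by simp
  from V.independent_span_bound[OF this indH HG] cardH cardG show ?thesis by simp
qed


inductive gp :: "((nat\<Rightarrow>complex)\<Rightarrow>complex) set \<Rightarrow> nat \<Rightarrow> ((nat\<Rightarrow>complex)\<Rightarrow>complex) \<Rightarrow> bool"
  for V :: "((nat\<Rightarrow>complex)\<Rightarrow>complex) set" where
  gc0: "gp V t (\<lambda>_. c)"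
| gadd0: "gp V t f \<Longrightarrow> gp V t g \<Longrightarrow> gp V t (\<lambda>a. f a + g a)"
| gmul0: "v \<in> V \<Longrightarrow> gp V t f \<Longrightarrow> gp V (Suc t) (\<lambda>a. v a * f a)"
| gmono0: "gp V t f \<Longrightarrow> gp V (Suc t) f"

definition gpoly where "gpoly V t = Collect (gp V t)"

lemma gpoly_gc: "(\<lambda>_. c) \<in> gpoly V t" unfolding gpoly_def by (auto intro: gc0)
lemma gpoly_gadd: "f \<in> gpoly V t \<Longrightarrow> g \<in> gpoly V t \<Longrightarrow> (\<lambda>a. f a + g a) \<in> gpoly V t"
  unfolding gpoly_def by (auto intro: gadd0)
lemma gpoly_gmul: "v \<in> V \<Longrightarrow> f \<in> gpoly V t \<Longrightarrow> (\<lambda>a. v a * f a) \<in> gpoly V (Suc t)"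
  unfolding gpoly_def by (auto intro: gmul0)
lemma gpoly_gmono: "f \<in> gpoly V t \<Longrightarrow> f \<in> gpoly V (Suc t)"
  unfolding gpoly_def by (auto intro: gmono0)

lemma gpoly_induct[consumes 1, case_names gc gadd gmul gmono]:
  assumes "f \<in> gpoly V t"
    and "\<And>c t. P (\<lambda>_. c) t"
    and "\<And>f t g. f \<in> gpoly V t \<Longrightarrow> P f t \<Longrightarrow> g \<in> gpoly V t \<Longrightarrow> P g t \<Longrightarrow> P (\<lambda>a. f a + g a) t"
    and "\<And>v f t. v \<in> V \<Longrightarrow> f \<in> gpoly V t \<Longrightarrow> P f t \<Longrightarrow> P (\<lambda>a. v a * f a) (Suc t)"
    and "\<And>f t. f \<in> gpoly V t \<Longrightarrow> P f t \<Longrightarrow> P f (Suc t)"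
  shows "P f t"
  using assms(1) unfolding gpoly_def mem_Collect_eq
  by (induction rule: gp.induct) (use assms(2-5) in \<open>auto simp: gpoly_def\<close>)

lemma gpoly_mono: "f \<in> gpoly V s \<Longrightarrow> s \<le> t \<Longrightarrow> f \<in> gpoly V t"
  by (induction t) (auto simp: le_Suc_eq intro: gpoly_gmono)

lemma gpoly_scale: "f \<in> gpoly V t \<Longrightarrow> (\<lambda>a. c * f a) \<in> gpoly V t"
proof (induction rule: gpoly_induct)
  case (gc c' t) then show ?case using gpoly_gc[of "c*c'"] by simp
next
  case (gadd f t g) then show ?case using gpoly_gadd[of "\<lambda>a. c * f a" V t "\<lambda>a. c * g a"] by (simp add: algebra_simps)
next
  case (gmul v f t) then show ?case using gpoly_gmul[of v V "\<lambda>a. c * f a" t] by (simp add: algebra_simps)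
next
  case (gmono f t) then show ?case by (blast intro: gpoly_gmono)
qed

lemma gpoly_mult: "f \<in> gpoly V s \<Longrightarrow> g \<in> gpoly V t \<Longrightarrow> (\<lambda>a. f a * g a) \<in> gpoly V (s + t)"
proof (induction arbitrary: g rule: gpoly_induct)
  case (gc c s) then show ?case using gpoly_mono[OF gpoly_scale[OF gc(1), of c]] by simp
next
  case (gadd f s h) then show ?case using gpoly_gadd[OF gadd(3)[OF gadd(5)] gadd(4)[OF gadd(5)]] by (simp add: algebra_simps)
next
  case (gmul v f s) then show ?case using gpoly_gmul[OF gmul(1) gmul(3)[OF gmul(4)]] by (simp add: algebra_simps)
next
  case (gmono f s) then show ?case using gpoly_gmono[OF gmono(2)[OF gmono(3)]] by simp
qed

lemma gpoly_sum: "finite A \<Longrightarrow> (\<And>x. x \<in> A \<Longrightarrow> F x \<in> gpoly V t) \<Longrightarrow> (\<lambda>a. \<Sum>x\<in>A. F x a) \<in> gpoly V t"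
proof (induction A rule: finite_induct)
  case empty then show ?case using gpoly_gc[of 0] by simp
next
  case (insert x A) then show ?case using gpoly_gadd[of "F x" V t "\<lambda>a. \<Sum>x\<in>A. F x a"] by simp
qed

lemma gpoly_pow: "v \<in> gpoly V s \<Longrightarrow> (\<lambda>a. v a ^ n) \<in> gpoly V (n * s)"
proof (induction n)
  case 0 then show ?case using gpoly_gc[of 1] by simp
next
  case (Suc n) then show ?case using gpoly_mult[OF Suc(2) Suc(1)[OF Suc(2)]] by (simp add: add.commute)
qed

lemma gpoly_var: "v \<in> V \<Longrightarrow> v \<in> gpoly V 1"
  using gpoly_gmul[of v V "\<lambda>_. 1" 0, OF _ gpoly_gc] by simp

definition CV :: "((nat\<Rightarrow>complex)\<Rightarrow>complex) set" where "CV = range (\<lambda>i a. a i)"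

lemma gpoly_poly_fun: "f \<in> gpoly CV t \<Longrightarrow> f \<in> poly_fun"
  by (induction rule: gpoly_induct) (auto simp: CV_def intro: poly_fun.intros)

lemma poly_fun_gpoly: "f \<in> poly_fun \<Longrightarrow> \<exists>t. f \<in> gpoly CV t"
proof (induction rule: poly_fun.induct)
  case (pf_const c) then show ?case using gpoly_gc by blast
next
  case (pf_var i) then show ?case using gpoly_var[of "\<lambda>a. a i" CV] by (auto simp: CV_def)
next
  case (pf_add p q)
  then obtain s t where "p \<in> gpoly CV s" "q \<in> gpoly CV t" by blast
  then have "p \<in> gpoly CV (s+t)" "q \<in> gpoly CV (s+t)" by (auto intro: gpoly_mono)
  then show ?case using gpoly_gadd by blast
next
  case (pf_mult p q)
  then obtain s t where "p \<in> gpoly CV s" "q \<in> gpoly CV t" by blast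
  then show ?case using gpoly_mult by blast
qed

definition indep_on :: "(nat\<Rightarrow>complex) set \<Rightarrow> (nat \<Rightarrow> (nat\<Rightarrow>complex)\<Rightarrow>complex) \<Rightarrow> nat \<Rightarrow> bool" where
  "indep_on Z h n \<longleftrightarrow> (\<forall>d. (\<forall>x\<in>Z. (\<Sum>j<n. d j * h j x) = 0) \<longrightarrow> (\<forall>j<n. d j = 0))"

definition Hge :: "(nat\<Rightarrow>complex) set \<Rightarrow> nat \<Rightarrow> nat \<Rightarrow> bool" where
  "Hge Z t n \<longleftrightarrow> (\<exists>h. (\<forall>j<n. h j \<in> gpoly CV t) \<and> indep_on Z h n)"

lemma irred_cancel:
  assumes Z: "zar_irred r Z" and f: "f \<in> poly_fun" and g: "g \<in> poly_fun"
    and fg: "\<forall>x\<in>Z. f x * g x = 0" and nf: "\<exists>x\<in>Z. f x \<noteq> 0"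
  shows "\<forall>x\<in>Z. g x = 0"
proof -
  from Z obtain S where S: "S \<subseteq> poly_fun" "Z = {a \<in> bform_space r. \<forall>p\<in>S. p a = 0}"
    unfolding zar_irred_def zar_closed_def by blast
  define Z1 where "Z1 = {a \<in> bform_space r. \<forall>p\<in>insert f S. p a = 0}"
  define Z2 where "Z2 = {a \<in> bform_space r. \<forall>p\<in>insert g S. p a = 0}"
  have c1: "zar_closed r Z1" unfolding zar_closed_def Z1_def using S f by blast
  have c2: "zar_closed r Z2" unfolding zar_closed_def Z2_def using S g by blast
  have "Z = Z1 \<union> Z2" using fg unfolding S(2) Z1_def Z2_def by auto
  with Z c1 c2 have "Z = Z1 \<or> Z = Z2" unfolding zar_irred_def by blast
  moreover have "Z \<noteq> Z1" using nf unfolding S(2) Z1_def by auto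
  ultimately have "Z = Z2" by blast
  then show ?thesis unfolding Z2_def by auto
qed

lemma sum_split_add: "(\<Sum>j<a+(b::nat). F j) = (\<Sum>j<a. F j) + (\<Sum>j<b. F (a+j))"
  by (induction b) (auto simp: add.assoc)

lemma Hge_step:
  assumes Zc: "zar_closed r Z" and Z': "zar_irred r Z'" and sub: "Z \<subset> Z'"
  shows "\<exists>e. \<forall>E\<ge>e. \<forall>t n1 n2. Hge Z' t n1 \<longrightarrow> Hge Z (t+E) n2 \<longrightarrow> Hge Z' (t+E) (n1+n2)"
proof -
  from Zc obtain S where S: "S \<subseteq> poly_fun" "Z = {a \<in> bform_space r. \<forall>p\<in>S. p a = 0}"
    unfolding zar_closed_def by blast
  from Z' have Z'b: "Z' \<subseteq> bform_space r" unfolding zar_irred_def zar_closed_def by blast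
  from sub obtain x0 where x0: "x0 \<in> Z'" "x0 \<notin> Z" by blast
  then obtain f where f: "f \<in> S" "f x0 \<noteq> 0" using Z'b S(2) by blast
  then have fp: "f \<in> poly_fun" using S by blast
  from poly_fun_gpoly[OF fp] obtain e where fe: "f \<in> gpoly CV e" by blast
  have fZ: "\<forall>x\<in>Z. f x = 0" using S f by blast
  show ?thesis
  proof (intro exI allI impI)
    fix E t n1 n2 assume E: "e \<le> E" and H1: "Hge Z' t n1" and H2: "Hge Z (t+E) n2"
    from H1 obtain h where h: "\<forall>j<n1. h j \<in> gpoly CV t" "indep_on Z' h n1" unfolding Hge_def by blast
    from H2 obtain k where k: "\<forall>j<n2. k j \<in> gpoly CV (t+E)" "indep_on Z k n2" unfolding Hge_def by blast
    define H where "H j = (if j < n1 then (\<lambda>a. f a * h j a) else k (j - n1))" for j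
    have Hp: "\<forall>j<n1+n2. H j \<in> gpoly CV (t+E)"
    proof (intro allI impI)
      fix j assume j: "j < n1 + n2"
      show "H j \<in> gpoly CV (t+E)"
      proof (cases "j < n1")
        case True
        then have "(\<lambda>a. f a * h j a) \<in> gpoly CV (e + t)" using gpoly_mult[OF fe] h by blast
        then show ?thesis using True E unfolding H_def by (auto intro: gpoly_mono)
      next
        case False then show ?thesis using k j unfolding H_def by auto
      qed
    qed
    have "indep_on Z' H (n1+n2)"
      unfolding indep_on_def
    proof (rule allI, rule impI)
      fix d assume d: "\<forall>x\<in>Z'. (\<Sum>j<n1+n2. d j * H j x) = 0"
      have split: "(\<Sum>j<n1+n2. d j * H j x) = (\<Sum>j<n1. d j * f x * h j x) + (\<Sum>j<n2. d (n1+j) * k j x)" for x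
        unfolding sum_split_add by (simp add: H_def mult.assoc)
      have "\<forall>x\<in>Z. (\<Sum>j<n2. d (n1+j) * k j x) = 0"
      proof
        fix x assume x: "x \<in> Z"
        then have "x \<in> Z'" using sub by blast
        then have "(\<Sum>j<n1. d j * f x * h j x) + (\<Sum>j<n2. d (n1+j) * k j x) = 0" using d split by simp
        then show "(\<Sum>j<n2. d (n1+j) * k j x) = 0" using fZ x by simp
      qed
      then have d2: "\<forall>j<n2. d (n1+j) = 0" using k(2)[unfolded indep_on_def, rule_format, of "\<lambda>j. d (n1+j)"] by blast
      have fg0: "\<forall>x\<in>Z'. f x * (\<Sum>j<n1. d j * h j x) = 0"
      proof
        fix x assume "x \<in> Z'"
        then have "(\<Sum>j<n1. d j * f x * h j x) = 0" using d split d2 by simp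
        then show "f x * (\<Sum>j<n1. d j * h j x) = 0" by (simp add: sum_distrib_left algebra_simps)
      qed
      have "\<forall>j<n1. (\<lambda>a. d j * h j a) \<in> gpoly CV t" using h(1) gpoly_scale by blast
      then have "(\<lambda>a. \<Sum>j\<in>{..<n1}. d j * h j a) \<in> gpoly CV t"
        by (intro gpoly_sum) auto
      then have gp: "(\<lambda>x. \<Sum>j<n1. d j * h j x) \<in> poly_fun" by (rule gpoly_poly_fun)
      have nf: "\<exists>x\<in>Z'. f x \<noteq> 0" using x0 f by blast
      have "\<forall>x\<in>Z'. (\<Sum>j<n1. d j * h j x) = 0"
        by (rule irred_cancel[OF Z' fp gp fg0 nf])
      then have d1: "\<forall>j<n1. d j = 0" using h(2) unfolding indep_on_def by blast
      show "\<forall>j<n1+n2. d j = 0"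
      proof (intro allI impI)
        fix j assume "j < n1 + n2"
        then show "d j = 0" using d1 d2[rule_format, of "j - n1"] by (cases "j < n1") auto
      qed
    qed
    then show "Hge Z' (t+E) (n1+n2)" unfolding Hge_def using Hp by blast
  qed
qed

lemma Hge_one: "Z \<noteq> {} \<Longrightarrow> Hge Z t 1"
  unfolding Hge_def indep_on_def
  by (rule exI[of _ "\<lambda>_ _. 1"]) (auto intro: gpoly_gc)

lemma chain_growth:
  assumes irr: "\<forall>i\<le>k. zar_irred r (Z i)" and strict: "\<forall>i<k. Z i \<subset> Z (Suc i)"
  shows "i \<le> k \<Longrightarrow> \<exists>E. \<forall>E'\<ge>E. \<forall>q. Hge (Z i) (q*E') ((q+i) choose i)"
proof (induction i)
  case 0
  then have "Z 0 \<noteq> {}" using irr unfolding zar_irred_def by auto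
  then show ?case using Hge_one by auto
next
  case (Suc i)
  then obtain E1 where E1: "\<forall>E'\<ge>E1. \<forall>q. Hge (Z i) (q*E') ((q+i) choose i)" by auto
  have "zar_closed r (Z i)" using irr Suc(2) unfolding zar_irred_def by auto
  from Hge_step[OF this, of "Z (Suc i)"] irr strict Suc(2)
  obtain e where e: "\<forall>E\<ge>e. \<forall>t n1 n2. Hge (Z (Suc i)) t n1 \<longrightarrow> Hge (Z i) (t+E) n2 \<longrightarrow> Hge (Z (Suc i)) (t+E) (n1+n2)"
    by auto
  have ne: "Z (Suc i) \<noteq> {}" using irr Suc(2) unfolding zar_irred_def by auto
  show ?case
  proof (intro exI allI impI)
    fix E' q assume E': "max E1 e \<le> E'"
    show "Hge (Z (Suc i)) (q*E') ((q + Suc i) choose Suc i)"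
    proof (induction q)
      case 0 then show ?case using Hge_one[OF ne] by simp
    next
      case (Suc q)
      have "E1 \<le> E'" using E' by simp
      then have "\<forall>q. Hge (Z i) (q*E') ((q+i) choose i)" using E1 by blast
      then have "Hge (Z i) (Suc q * E') ((Suc q + i) choose i)" by (rule spec)
      then have "Hge (Z i) (q*E' + E') ((Suc q + i) choose i)" by (simp add: add.commute)
      with e E' Suc have "Hge (Z (Suc i)) (q*E' + E') (((q + Suc i) choose Suc i) + ((Suc q + i) choose i))"
        by auto
      moreover have "((q + Suc i) choose Suc i) + ((Suc q + i) choose i) = (Suc q + Suc i) choose Suc i"
        by simp
      ultimately show ?case by (simp add: add.commute)
    qed
  qed
qed


lemma ff_Suc_right: "ff n (Suc k) = ff n k * (n - k)"
  unfolding ff_def by simp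

lemma ff_shift: "ff (Suc n) (Suc k) = Suc n * ff n k"
  unfolding ff_def by (simp add: prod.lessThan_Suc_shift del: prod.lessThan_Suc)

lemma ff_zero: "n < k \<Longrightarrow> ff n k = 0"
  unfolding ff_def by (rule prod_zero) auto

lemma ff_0 [simp]: "ff n 0 = 1"
  unfolding ff_def by simp

lemma ff_pascal: "ff (Suc n) a = ff n a + a * ff n (a - 1)"
proof (induction a)
  case 0 then show ?case by simp
next
  case (Suc a)
  have "ff (Suc n) (Suc a) = Suc n * ff n a" by (rule ff_shift)
  moreover have "ff n (Suc a) + Suc a * ff n a = Suc n * ff n a"
  proof (cases "a \<le> n")
    case True
    have "ff n (Suc a) + Suc a * ff n a = ff n a * ((n - a) + Suc a)"
      by (simp only: ff_Suc_right distrib_left mult.commute)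
    also have "(n - a) + Suc a = Suc n" using True by simp
    finally show ?thesis by (simp only: mult.commute)
  next
    case False then show ?thesis by (simp add: ff_zero)
  qed
  ultimately show ?case by simp
qed

lemma ff_nz: "ff n k \<noteq> 0 \<Longrightarrow> k \<le> n"
  using ff_zero[of n k] by (cases "k \<le> n") auto

definition Aco :: "nat \<Rightarrow> nat \<Rightarrow> nat \<Rightarrow> nat \<Rightarrow> nat" where
  "Aco r m j i = ff (r - i) (2*m - j) * ff i j"

lemma Aco_nz: "Aco r m j i \<noteq> 0 \<Longrightarrow> j \<le> i \<and> 2*m - j \<le> r - i"
  unfolding Aco_def using ff_nz by auto

lemma I1:
  assumes "i \<le> r"
  shows "i * Aco r m j (i - 1) = (i - j) * Aco r m j i + (2*m - j) * Aco r m (Suc j) i"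
proof (cases i)
  case 0 then show ?thesis by (simp add: Aco_def ff_zero)
next
  case (Suc i0)
  define n where "n = r - i"
  define a where "a = 2*m - j"
  have r: "r - i0 = Suc n" using assms Suc unfolding n_def by simp
  have a1: "2*m - Suc j = a - 1" unfolding a_def by simp
  have A0: "Aco r m j (i - 1) = ff (Suc n) a * ff i0 j" unfolding Aco_def using Suc r a_def by simp
  have A1: "Aco r m j i = ff n a * ff i j" unfolding Aco_def n_def a_def ..
  have A2: "Aco r m (Suc j) i = ff n (a - 1) * ff i (Suc j)" unfolding Aco_def n_def a1 ..
  have p: "ff (Suc n) a = ff n a + a * ff n (a - 1)" by (rule ff_pascal)
  have q: "i * ff i0 j = ff i (Suc j)" using Suc ff_shift by simp
  have q2: "ff i (Suc j) = ff i j * (i - j)" by (rule ff_Suc_right)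
  have "i * Aco r m j (i - 1) = (ff n a + a * ff n (a - 1)) * (i * ff i0 j)"
    unfolding A0 p by (simp only: mult_ac)
  also have "\<dots> = ff n a * ff i (Suc j) + a * (ff n (a - 1) * ff i (Suc j))"
    unfolding q by (simp only: distrib_left distrib_right mult_ac)
  also have "\<dots> = (i - j) * Aco r m j i + a * Aco r m (Suc j) i"
    unfolding A1 A2 q2 by (simp only: mult_ac)
  finally show ?thesis unfolding a_def .
qed

lemma I1_int:
  assumes "i \<le> r" "j \<le> 2*m"
  shows "int i * int (Aco r m j (i - 1)) = (int i - int j) * int (Aco r m j i) + (2*int m - int j) * int (Aco r m (Suc j) i)"
proof -
  have e: "int (i - j) * int (Aco r m j i) = (int i - int j) * int (Aco r m j i)"
    using Aco_nz[of r m j i] by (cases "j \<le> i") auto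
  have "int (i * Aco r m j (i - 1)) = int ((i - j) * Aco r m j i + (2*m - j) * Aco r m (Suc j) i)"
    using I1[OF assms(1)] by simp
  then show ?thesis using e assms(2) by (simp add: of_nat_diff)
qed

definition Phi :: "nat \<Rightarrow> nat \<Rightarrow> nat \<Rightarrow> nat \<Rightarrow> int" where
  "Phi r m i l = (\<Sum>j\<le>2*m. (-1)^j * int (2*m choose j) * (int (Aco r m j i) * int (Aco r m (2*m-j) l)))"

lemma sum_atMost_first: "(\<Sum>j\<le>n. g j) = g 0 + (\<Sum>j<n. g (Suc j))"
  for g :: "nat \<Rightarrow> 'a::comm_monoid_add"
  by (induction n) (auto simp: add.assoc)

lemma sum_atMost_last: "(\<Sum>j\<le>n. g j) = (\<Sum>j<n. g j) + g n"
  for g :: "nat \<Rightarrow> 'a::comm_monoid_add"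
  by (simp add: lessThan_Suc_atMost[symmetric])

lemma binom_shift: "(n choose j) * (n - j) = (n choose Suc j) * Suc j"
proof -
  have "(n - j) * (n choose j) = n * ((n - 1) choose j)" by (rule binomial_absorb_comp)
  moreover have "Suc j * (n choose Suc j) = n * ((n - 1) choose j)"
    using times_binomial_minus1_eq[of "Suc j" n] by simp
  ultimately show ?thesis by (simp add: mult.commute)
qed

lemma II:
  assumes "i \<le> r" "l \<le> r"
  shows "int i * Phi r m (i - 1) l + int l * Phi r m i (l - 1) = (int i + int l - 2 * int m) * Phi r m i l"
proof -
  define A where "A j x = int (Aco r m j x)" for j x
  define C where "C j = (-1)^j * int (2*m choose j)" for j :: nat
  have Phi_eq: "Phi r m x y = (\<Sum>j\<le>2*m. C j * (A j x * A (2*m-j) y))" for x y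
    unfolding Phi_def A_def C_def by simp
  have t1: "int i * A j (i - 1) = (int i - int j) * A j i + (2*int m - int j) * A (Suc j) i" if "j \<le> 2*m" for j
    unfolding A_def using I1_int[OF assms(1) that] .
  have t2: "int l * A (2*m-j) (l - 1) = (int l - int (2*m-j)) * A (2*m-j) l + int j * A (Suc (2*m-j)) l"
    if "j \<le> 2*m" for j
    unfolding A_def using I1_int[OF assms(2), of "2*m-j" m] that by (simp add: of_nat_diff)
  define X where "X j = C j * (int (2*m - j) * A (Suc j) i * A (2*m-j) l)" for j
  define Y where "Y j = C j * (int j * A j i * A (Suc (2*m-j)) l)" for j
  have XY0: "(\<Sum>j\<le>2*m. X j) + (\<Sum>j\<le>2*m. Y j) = 0"
  proof -
    have "(\<Sum>j\<le>2*m. X j) = (\<Sum>j<2*m. X j)" unfolding sum_atMost_last X_def by simp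
    moreover have "(\<Sum>j\<le>2*m. Y j) = (\<Sum>j<2*m. Y (Suc j))" unfolding sum_atMost_first Y_def by simp
    moreover have "X j + Y (Suc j) = 0" if "j < 2*m" for j
    proof -
      have b: "int (2*m choose j) * int (2*m - j) = int (2*m choose Suc j) * int (Suc j)"
        using arg_cong[OF binom_shift[of "2*m" j], of int] by (simp only: of_nat_mult)
      have s: "Suc (2*m - Suc j) = 2*m - j" using that by simp
      define P where "P = A (Suc j) i * A (2*m-j) l"
      have "X j = (-1)^j * (int (2*m choose j) * int (2*m - j)) * P"
        unfolding X_def C_def P_def by (simp add: algebra_simps)
      also have "\<dots> = (-1)^j * (int (2*m choose Suc j) * int (Suc j)) * P" using b by simp
      finally have x: "X j = (-1)^j * (int (2*m choose Suc j) * int (Suc j)) * P" .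
      have y: "Y (Suc j) = - ((-1)^j * (int (2*m choose Suc j) * int (Suc j)) * P)"
        unfolding Y_def C_def s P_def by (simp add: algebra_simps)
      show ?thesis using x y by simp
    qed
    ultimately show ?thesis by (simp add: sum.distrib[symmetric])
  qed
  have "int i * Phi r m (i - 1) l + int l * Phi r m i (l - 1)
      = (\<Sum>j\<le>2*m. C j * ((int i * A j (i-1)) * A (2*m-j) l + A j i * (int l * A (2*m-j) (l-1))))"
    unfolding Phi_eq sum_distrib_left sum.distrib[symmetric]
    by (rule sum.cong[OF refl]) (simp only: ring_distribs mult_ac)
  also have "\<dots> = (\<Sum>j\<le>2*m. (int i + int l - 2 * int m) * (C j * (A j i * A (2*m-j) l)) + X j + Y j)"
  proof (rule sum.cong[OF refl])
    fix j assume "j \<in> {..2*m}"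
    then have j: "j \<le> 2*m" by simp
    have d: "int (2*m - j) = 2*int m - int j" using j by simp
    show "C j * ((int i * A j (i-1)) * A (2*m-j) l + A j i * (int l * A (2*m-j) (l-1)))
        = (int i + int l - 2 * int m) * (C j * (A j i * A (2*m-j) l)) + X j + Y j"
      unfolding t1[OF j] t2[OF j] X_def Y_def d by (simp add: algebra_simps)
  qed
  also have "\<dots> = (int i + int l - 2 * int m) * Phi r m i l + (\<Sum>j\<le>2*m. X j) + (\<Sum>j\<le>2*m. Y j)"
    unfolding Phi_eq by (simp add: sum.distrib sum_distrib_left)
  also have "\<dots> = (int i + int l - 2 * int m) * Phi r m i l" using XY0 by simp
  finally show ?thesis by simp
qed


lemma transv_Phi:
  "transv r m a k = (\<Sum>i\<le>r. \<Sum>l\<le>r. if i + l = k + 2*m then of_int (Phi r m i l) * a i * a l else 0)"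
proof -
  have "transv r m a k = (\<Sum>i\<le>r. \<Sum>l\<le>r. \<Sum>j\<le>2*m. if i + l = k + 2*m then
          (-1)^j * of_nat (2*m choose j)
          * of_nat (ff (r-i) (2*m-j) * ff i j * ff (r-l) j * ff l (2*m-j)) * a i * a l else 0)"
    unfolding transv_def by (subst sum.swap) (subst (2) sum.swap, rule refl)
  also have "\<dots> = (\<Sum>i\<le>r. \<Sum>l\<le>r. if i + l = k + 2*m then of_int (Phi r m i l) * a i * a l else 0)"
  proof (intro sum.cong refl)
    fix i l
    show "(\<Sum>j\<le>2*m. if i + l = k + 2*m then
          (-1)^j * of_nat (2*m choose j)
          * of_nat (ff (r-i) (2*m-j) * ff i j * ff (r-l) j * ff l (2*m-j)) * a i * a l else 0)
        = (if i + l = k + 2*m then of_int (Phi r m i l) * a i * a l else 0)"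
    proof (cases "i + l = k + 2*m")
      case True
      have "of_int (Phi r m i l) = (\<Sum>j\<le>2*m. (-1)^j * of_nat (2*m choose j)
          * of_nat (ff (r-i) (2*m-j) * ff i j * ff (r-l) j * ff l (2*m-j)) :: complex)"
        unfolding Phi_def of_int_sum
      proof (intro sum.cong refl)
        fix j assume "j \<in> {..2*m}"
        then have j: "2*m - (2*m - j) = j" by simp
        show "of_int ((-1)^j * int (2*m choose j) * (int (Aco r m j i) * int (Aco r m (2*m-j) l)))
          = ((-1)^j * of_nat (2*m choose j)
          * of_nat (ff (r-i) (2*m-j) * ff i j * ff (r-l) j * ff l (2*m-j)) :: complex)"
          unfolding Aco_def j by (simp add: mult_ac)
      qed
      then show ?thesis using True by (simp add: sum_distrib_right)
    qed simp
  qed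
  finally show ?thesis .
qed

lemma Phi_high:
  assumes "i \<le> r" "l \<le> r" "2*r - 2*m < i + l"
  shows "Phi r m i l = 0"
  unfolding Phi_def
proof (rule sum.neutral, rule ballI)
  fix j assume "j \<in> {..2*m}"
  then have j: "j \<le> 2*m" by simp
  have "Aco r m j i = 0 \<or> Aco r m (2*m-j) l = 0"
  proof (rule ccontr)
    assume "\<not> ?thesis"
    then have "2*m - j \<le> r - i" "2*m - (2*m - j) \<le> r - l" using Aco_nz by blast+
    then show False using assms j by linarith
  qed
  then show "(-1)^j * int (2*m choose j) * (int (Aco r m j i) * int (Aco r m (2*m-j) l)) = 0" by auto
qed

lemma transv_high:
  assumes "2*r - 4*m < k"
  shows "transv r m b k = 0"
  unfolding transv_Phi
proof (intro sum.neutral ballI)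
  fix i l assume "i \<in> {..r}" "l \<in> {..r}"
  then show "(if i + l = k + 2*m then of_int (Phi r m i l) * b i * b l else 0) = 0"
    using Phi_high[of i r l m] assms by auto
qed

lemma sum_shift_Suc:
  fixes g :: "nat \<Rightarrow> 'a::comm_monoid_add"
  assumes "g 0 = 0" "g (Suc r) = 0"
  shows "(\<Sum>i\<le>r. g (Suc i)) = (\<Sum>i\<le>r. g i)"
proof -
  have "(\<Sum>i\<le>Suc r. g i) = g 0 + (\<Sum>i\<le>r. g (Suc i))" by (rule sum.atMost_Suc_shift)
  moreover have "(\<Sum>i\<le>Suc r. g i) = (\<Sum>i\<le>r. g i) + g (Suc r)" by simp
  ultimately show ?thesis using assms by simp
qed

definition TD :: "nat \<Rightarrow> nat \<Rightarrow> (nat \<Rightarrow> complex) \<Rightarrow> (nat \<Rightarrow> complex) \<Rightarrow> nat \<Rightarrow> complex" where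
  "TD r m b b' k = (\<Sum>i\<le>r. \<Sum>l\<le>r. if i + l = k + 2*m then of_int (Phi r m i l) * (b' i * b l + b i * b' l) else 0)"

lemma TD_identity:
  assumes b: "b \<in> bform_space r"
  shows "TD r m b (\<lambda>i. of_nat (Suc i) * b (Suc i)) k = of_nat (Suc k) * transv r m b (Suc k)"
proof -
  define K where "K = Suc k + 2*m"
  have bS: "b (Suc r) = 0" using b unfolding bform_space_def by simp
  define g where "g i = (\<Sum>l\<le>r. if i + l = K then of_int (int i * Phi r m (i - 1) l) * b i * b l else 0)" for i
  define h where "h i l = (if i + l = K then of_int (int l * Phi r m i (l - 1)) * b i * b l else 0)" for i l
  have S1: "(\<Sum>i\<le>r. \<Sum>l\<le>r. if i + l = k + 2*m then of_int (Phi r m i l) * (of_nat (Suc i) * b (Suc i) * b l) else 0)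
      = (\<Sum>i\<le>r. g i)"
  proof -
    have "(\<Sum>i\<le>r. \<Sum>l\<le>r. if i + l = k + 2*m then of_int (Phi r m i l) * (of_nat (Suc i) * b (Suc i) * b l) else 0)
        = (\<Sum>i\<le>r. g (Suc i))"
      unfolding g_def K_def by (intro sum.cong refl) (auto simp: mult_ac)
    also have "\<dots> = (\<Sum>i\<le>r. g i)"
    proof (rule sum_shift_Suc)
      show "g 0 = 0" unfolding g_def by simp
      show "g (Suc r) = 0" unfolding g_def by (rule sum.neutral) (simp add: bS)
    qed
    finally show ?thesis .
  qed
  have S2: "(\<Sum>i\<le>r. \<Sum>l\<le>r. if i + l = k + 2*m then of_int (Phi r m i l) * (b i * (of_nat (Suc l) * b (Suc l))) else 0)
      = (\<Sum>i\<le>r. \<Sum>l\<le>r. h i l)"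
  proof (rule sum.cong[OF refl])
    fix i assume "i \<in> {..r}"
    have "(\<Sum>l\<le>r. if i + l = k + 2*m then of_int (Phi r m i l) * (b i * (of_nat (Suc l) * b (Suc l))) else 0)
        = (\<Sum>l\<le>r. h i (Suc l))"
      unfolding h_def K_def by (intro sum.cong refl) (auto simp: mult_ac)
    also have "\<dots> = (\<Sum>l\<le>r. h i l)"
      by (rule sum_shift_Suc) (auto simp: h_def bS)
    finally show "(\<Sum>l\<le>r. if i + l = k + 2*m then of_int (Phi r m i l) * (b i * (of_nat (Suc l) * b (Suc l))) else 0)
        = (\<Sum>l\<le>r. h i l)" .
  qed
  have "TD r m b (\<lambda>i. of_nat (Suc i) * b (Suc i)) k
      = (\<Sum>i\<le>r. \<Sum>l\<le>r. if i + l = k + 2*m then of_int (Phi r m i l) * (of_nat (Suc i) * b (Suc i) * b l) else 0)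
      + (\<Sum>i\<le>r. \<Sum>l\<le>r. if i + l = k + 2*m then of_int (Phi r m i l) * (b i * (of_nat (Suc l) * b (Suc l))) else 0)"
    unfolding TD_def sum.distrib[symmetric] by (intro sum.cong refl) (simp add: distrib_left)
  also have "\<dots> = (\<Sum>i\<le>r. \<Sum>l\<le>r. (if i + l = K then of_int (int i * Phi r m (i - 1) l) * b i * b l else 0) + h i l)"
    unfolding S1 S2 g_def sum.distrib ..
  also have "\<dots> = (\<Sum>i\<le>r. \<Sum>l\<le>r. of_nat (Suc k) * (if i + l = Suc k + 2*m then of_int (Phi r m i l) * b i * b l else 0))"
  proof (intro sum.cong refl)
    fix i l assume il: "i \<in> {..r}" "l \<in> {..r}"
    show "(if i + l = K then of_int (int i * Phi r m (i - 1) l) * b i * b l else 0) + h i l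
        = of_nat (Suc k) * (if i + l = Suc k + 2*m then of_int (Phi r m i l) * b i * b l else 0)"
    proof (cases "i + l = K")
      case True
      have e: "int i * Phi r m (i - 1) l + int l * Phi r m i (l - 1) = int (Suc k) * Phi r m i l"
        using II[of i r l m] il True unfolding K_def by simp
      have "of_int (int i * Phi r m (i - 1) l) * b i * b l + of_int (int l * Phi r m i (l - 1)) * b i * b l
          = (of_int (int i * Phi r m (i - 1) l + int l * Phi r m i (l - 1)) * b i * b l :: complex)"
        by (simp add: distrib_right)
      also have "\<dots> = of_nat (Suc k) * (of_int (Phi r m i l) * b i * b l)" unfolding e by simp
      finally show ?thesis using True unfolding h_def K_def by simp
    qed (simp add: h_def K_def)
  qed
  also have "\<dots> = of_nat (Suc k) * transv r m b (Suc k)"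
    unfolding transv_Phi sum_distrib_left ..
  finally show ?thesis .
qed


definition phi :: "nat \<Rightarrow> complex \<Rightarrow> (nat \<Rightarrow> complex) \<Rightarrow> nat \<Rightarrow> complex" where
  "phi r s a u = (\<Sum>i\<le>r. of_nat (i choose u) * s ^ (i - u) * a i)"

lemma phi_bform: "phi r s a \<in> bform_space r"
  unfolding bform_space_def phi_def
  by (auto intro!: sum.neutral simp: binomial_eq_0_iff)

lemma phi_0: "a \<in> bform_space r \<Longrightarrow> phi r 0 a = a"
proof
  fix u assume a: "a \<in> bform_space r"
  show "phi r 0 a u = a u"
  proof (cases "u \<le> r")
    case True
    have "phi r 0 a u = (\<Sum>i\<in>{u}. of_nat (i choose u) * 0 ^ (i - u) * a i)"
      unfolding phi_def by (rule sum.mono_neutral_right) (use True in auto)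
    then show ?thesis by simp
  next
    case False
    then have "phi r 0 a u = 0" unfolding phi_def by (intro sum.neutral) auto
    then show ?thesis using False a unfolding bform_space_def by auto
  qed
qed

lemma phi_deriv:
  "((\<lambda>s. phi r s a u) has_field_derivative (of_nat (Suc u) * phi r s a (Suc u))) (at s)"
proof -
  have d: "((\<lambda>s. phi r s a u) has_field_derivative
      (\<Sum>i\<le>r. of_nat (i choose u) * (of_nat (i - u) * s ^ (i - u - 1)) * a i)) (at s)"
    unfolding phi_def
  proof (rule DERIV_sum)
    fix n
    have "((\<lambda>s. s ^ (n - u)) has_field_derivative of_nat (n - u) * s ^ (n - u - 1)) (at s)"
      using DERIV_power[where n="n - u", OF DERIV_ident[of "at s"]] by simp
    from DERIV_cmult_right[OF DERIV_cmult[OF this, of "of_nat (n choose u)"], of "a n"]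
    show "((\<lambda>s. of_nat (n choose u) * s ^ (n - u) * a n) has_field_derivative
        of_nat (n choose u) * (of_nat (n - u) * s ^ (n - u - 1)) * a n) (at s)" .
  qed
  have "(\<Sum>i\<le>r. of_nat (i choose u) * (of_nat (i - u) * s ^ (i - u - 1)) * a i)
      = of_nat (Suc u) * phi r s a (Suc u)"
    unfolding phi_def sum_distrib_left
  proof (intro sum.cong refl)
    fix i
    have "of_nat (i choose u) * of_nat (i - u) = (of_nat (i choose Suc u) * of_nat (Suc u) :: complex)"
      using arg_cong[OF binom_shift[of i u], of "of_nat :: nat \<Rightarrow> complex"] by (simp only: of_nat_mult)
    moreover have "i - u - 1 = i - Suc u" by simp
    ultimately show "of_nat (i choose u) * (of_nat (i - u) * s ^ (i - u - 1)) * a i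
        = of_nat (Suc u) * (of_nat (i choose Suc u) * s ^ (i - Suc u) * a i)"
      by (simp add: mult_ac)
  qed
  with d show ?thesis by simp
qed

lemma transv_deriv:
  assumes "\<And>i. ((\<lambda>s. b i s) has_field_derivative b' i) (at s)"
  shows "((\<lambda>s. transv r m (\<lambda>i. b i s) k) has_field_derivative TD r m (\<lambda>i. b i s) b' k) (at s)"
  unfolding transv_Phi TD_def
proof (intro DERIV_sum)
  fix i l
  show "((\<lambda>s. if i + l = k + 2*m then of_int (Phi r m i l) * b i s * b l s else 0) has_field_derivative
      (if i + l = k + 2*m then of_int (Phi r m i l) * (b' i * b l s + b i s * b' l) else 0)) (at s)"
  proof (cases "i + l = k + 2*m")
    case True
    have "((\<lambda>s. of_int (Phi r m i l) * (b i s * b l s)) has_field_derivative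
      of_int (Phi r m i l) * (b' i * b l s + b i s * b' l)) (at s)"
    proof (rule DERIV_cmult)
      have "((\<lambda>s. b i s * b l s) has_field_derivative b' i * b l s + b' l * b i s) (at s)"
        by (rule DERIV_mult[OF assms assms])
      then show "((\<lambda>s. b i s * b l s) has_field_derivative b' i * b l s + b i s * b' l) (at s)"
        by (simp add: mult.commute)
    qed
    then show ?thesis using True by (simp add: mult.assoc)
  qed simp
qed

lemma invariance:
  assumes a: "a \<in> Mcone r m" and k: "k \<le> 2*r - 4*m"
  shows "transv r m (phi r s a) k = 0"
proof -
  define G where "G k s = transv r m (phi r s a) k" for k s
  have ab: "a \<in> bform_space r" using a unfolding Mcone_def by auto
  have dG: "((\<lambda>s. G k s) has_field_derivative of_nat (Suc k) * G (Suc k) s) (at s)" for k s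
  proof -
    have "((\<lambda>s. transv r m (\<lambda>i. phi r s a i) k) has_field_derivative
        TD r m (\<lambda>i. phi r s a i) (\<lambda>i. of_nat (Suc i) * phi r s a (Suc i)) k) (at s)"
      by (rule transv_deriv) (rule phi_deriv)
    moreover have "TD r m (\<lambda>i. phi r s a i) (\<lambda>i. of_nat (Suc i) * phi r s a (Suc i)) k
        = of_nat (Suc k) * transv r m (phi r s a) (Suc k)"
      using TD_identity[OF phi_bform[of r s a]] by simp
    ultimately show ?thesis unfolding G_def by simp
  qed
  have main: "\<forall>k. 2*r - 4*m < k + d \<longrightarrow> (\<forall>s. G k s = 0)" for d
  proof (induction d)
    case 0 then show ?case unfolding G_def using transv_high by auto
  next
    case (Suc d)
    show ?case
    proof (intro allI impI)
      fix k s assume kd: "2*r - 4*m < k + Suc d"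
      show "G k s = 0"
      proof (cases "2*r - 4*m < k + d")
        case True then show ?thesis using Suc.IH by blast
      next
        case False
        then have kk: "k \<le> 2*r - 4*m" by linarith
        have z: "\<forall>s. G (Suc k) s = 0" using Suc.IH kd by (metis add_Suc add_Suc_right)
        have "\<exists>c. \<forall>x\<in>UNIV. G k x = c"
        proof (rule has_field_derivative_zero_constant)
          fix x :: complex
          show "((\<lambda>s. G k s) has_field_derivative 0) (at x within UNIV)"
            using dG[of k x] z by simp
        qed simp
        then obtain c where c: "\<forall>x. G k x = c" by blast
        have "G k 0 = transv r m a k" unfolding G_def phi_0[OF ab] ..
        also have "\<dots> = 0" using a kk unfolding Mcone_def by auto
        finally show ?thesis using c by metis
      qed
    qed
  qed
  have "2*r - 4*m < k + Suc (2*r - 4*m)" by simp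
  with main[of "Suc (2*r - 4*m)"] show ?thesis unfolding G_def by blast
qed


lemma exists_nonroot:
  assumes a: "a \<in> bform_space r" "a \<noteq> (\<lambda>_. 0)"
  shows "\<exists>s. phi r s a 0 \<noteq> 0"
proof -
  define p where "p = (\<Sum>i\<le>r. monom (a i) i)"
  have pe: "poly p s = phi r s a 0" for s
    unfolding p_def phi_def by (simp add: poly_sum poly_monom mult_ac)
  obtain i where i: "a i \<noteq> 0" using a(2) by auto
  then have ir: "i \<le> r" using a(1) unfolding bform_space_def by (cases "i \<le> r") auto
  have "coeff p i = a i" unfolding p_def coeff_sum using ir
    by (simp add: coeff_monom sum.delta)
  then have "p \<noteq> 0" using i by auto
  then have "finite {x. poly p x = 0}" by (rule poly_roots_finite)
  then obtain s where "s \<notin> {x. poly p x = 0}"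
    using ex_new_if_finite[OF infinite_UNIV_char_0] by blast
  then show ?thesis using pe by auto
qed

definition TV :: "nat \<Rightarrow> nat \<Rightarrow> complex \<Rightarrow> ((nat\<Rightarrow>complex)\<Rightarrow>complex) set" where
  "TV r m s = (\<lambda>u a. phi r s a u) ` {..<2*m}"

definition Gd :: "nat \<Rightarrow> nat \<Rightarrow> complex \<Rightarrow> nat \<Rightarrow> ((nat\<Rightarrow>complex)\<Rightarrow>complex) \<Rightarrow> bool" where
  "Gd r m s D f \<longleftrightarrow> (\<exists>g\<in>gpoly (TV r m s) D. \<forall>a\<in>Mcone r m. f a = g a)"

lemma Gd_of: "g \<in> gpoly (TV r m s) D \<Longrightarrow> Gd r m s D g"
  unfolding Gd_def by blast

lemma Gd_cong: "Gd r m s D f \<Longrightarrow> (\<forall>a\<in>Mcone r m. f a = f' a) \<Longrightarrow> Gd r m s D f'"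
  unfolding Gd_def by auto

lemma Gd_add: "Gd r m s D f \<Longrightarrow> Gd r m s D g \<Longrightarrow> Gd r m s D (\<lambda>a. f a + g a)"
  unfolding Gd_def
proof (elim bexE)
  fix g1 g2 assume "g1 \<in> gpoly (TV r m s) D" "\<forall>a\<in>Mcone r m. f a = g1 a"
    "g2 \<in> gpoly (TV r m s) D" "\<forall>a\<in>Mcone r m. g a = g2 a"
  then show "\<exists>h\<in>gpoly (TV r m s) D. \<forall>a\<in>Mcone r m. f a + g a = h a"
    by (intro bexI[OF _ gpoly_gadd[of g1 _ _ g2]]) auto
qed

lemma Gd_scale: "Gd r m s D f \<Longrightarrow> Gd r m s D (\<lambda>a. c * f a)"
  unfolding Gd_def
proof (elim bexE)
  fix g1 assume "g1 \<in> gpoly (TV r m s) D" "\<forall>a\<in>Mcone r m. f a = g1 a"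
  then show "\<exists>h\<in>gpoly (TV r m s) D. \<forall>a\<in>Mcone r m. c * f a = h a"
    by (intro bexI[OF _ gpoly_scale[of g1]]) auto
qed

lemma Gd_mult: "Gd r m s D1 f \<Longrightarrow> Gd r m s D2 g \<Longrightarrow> Gd r m s (D1 + D2) (\<lambda>a. f a * g a)"
  unfolding Gd_def
proof (elim bexE)
  fix g1 g2 assume "g1 \<in> gpoly (TV r m s) D1" "\<forall>a\<in>Mcone r m. f a = g1 a"
    "g2 \<in> gpoly (TV r m s) D2" "\<forall>a\<in>Mcone r m. g a = g2 a"
  then show "\<exists>h\<in>gpoly (TV r m s) (D1 + D2). \<forall>a\<in>Mcone r m. f a * g a = h a"
    by (intro bexI[OF _ gpoly_mult[of g1 _ _ g2]]) auto
qed

lemma Gd_mono: "Gd r m s D f \<Longrightarrow> D \<le> D' \<Longrightarrow> Gd r m s D' f"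
  unfolding Gd_def by (auto intro: gpoly_mono)

lemma Gd_const: "Gd r m s D (\<lambda>_. c)"
  by (rule Gd_of, rule gpoly_gc)

lemma Gd_sum: "finite A \<Longrightarrow> (\<And>x. x \<in> A \<Longrightarrow> Gd r m s D (F x)) \<Longrightarrow> Gd r m s D (\<lambda>a. \<Sum>x\<in>A. F x a)"
proof (induction A rule: finite_induct)
  case empty then show ?case using Gd_const[of r m s D 0] by simp
next
  case (insert x A) then show ?case using Gd_add[of r m s D "F x" "\<lambda>a. \<Sum>x\<in>A. F x a"] by simp
qed

lemma Gd_L: "u < 2*m \<Longrightarrow> Gd r m s 1 (\<lambda>a. phi r s a u)"
  by (rule Gd_of, rule gpoly_var) (auto simp: TV_def)

lemma Gd_L0pow: "0 < m \<Longrightarrow> Gd r m s n (\<lambda>a. phi r s a 0 ^ n)"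
proof -
  assume "0 < m"
  then have "(\<lambda>a. phi r s a 0) \<in> gpoly (TV r m s) 1" by (intro gpoly_var) (auto simp: TV_def)
  from gpoly_pow[OF this, of n] show ?thesis by (intro Gd_of) simp
qed

lemma transv_single:
  assumes "l \<le> r" "2*m \<le> l"
  shows "transv r m b (l - 2*m) = (\<Sum>i\<le>l. of_int (Phi r m i (l - i)) * b i * b (l - i))"
proof -
  have "transv r m b (l - 2*m) = (\<Sum>i\<le>r. if i \<le> l then of_int (Phi r m i (l - i)) * b i * b (l - i) else 0)"
    unfolding transv_Phi
  proof (intro sum.cong refl)
    fix i assume i: "i \<in> {..r}"
    show "(\<Sum>l'\<le>r. if i + l' = l - 2*m + 2*m then of_int (Phi r m i l') * b i * b l' else 0)
        = (if i \<le> l then of_int (Phi r m i (l - i)) * b i * b (l - i) else 0)"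
    proof (cases "i \<le> l")
      case True
      have "(\<Sum>l'\<le>r. if i + l' = l - 2*m + 2*m then of_int (Phi r m i l') * b i * b l' else 0)
          = (\<Sum>l'\<le>r. if l' = l - i then of_int (Phi r m i l') * b i * b l' else 0)"
        using True assms by (intro sum.cong refl) auto
      also have "\<dots> = of_int (Phi r m i (l - i)) * b i * b (l - i)"
        using assms True by (subst sum.delta) auto
      finally show ?thesis using True by simp
    next
      case False then show ?thesis using assms by (auto intro!: sum.neutral)
    qed
  qed
  also have "\<dots> = (\<Sum>i\<in>{..r} \<inter> {..l}. of_int (Phi r m i (l - i)) * b i * b (l - i))"
    by (subst sum.inter_restrict) (auto simp: atMost_iff)
  also have "{..r} \<inter> {..l} = {..l}" using assms by auto
  finally show ?thesis .
qed

lemma ff_pos: "k \<le> n \<Longrightarrow> 0 < ff n k"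
  unfolding ff_def by (intro prod_pos) auto

lemma Phi_0l:
  assumes "2*m \<le> l" "l \<le> r"
  shows "Phi r m 0 l = int (ff r (2*m) * ff l (2*m))"
proof -
  have "Phi r m 0 l = (-1)^0 * int (2*m choose 0) * (int (Aco r m 0 0) * int (Aco r m (2*m-0) l))
      + (\<Sum>j<2*m. (-1)^(Suc j) * int (2*m choose Suc j) * (int (Aco r m (Suc j) 0) * int (Aco r m (2*m - Suc j) l)))"
    unfolding Phi_def by (rule sum_atMost_first)
  also have "(\<Sum>j<2*m. (-1)^(Suc j) * int (2*m choose Suc j) * (int (Aco r m (Suc j) 0) * int (Aco r m (2*m - Suc j) l))) = 0"
    by (intro sum.neutral) (auto simp: Aco_def ff_zero)
  finally show ?thesis by (simp add: Aco_def)
qed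

lemma Phi_l0:
  assumes "2*m \<le> l" "l \<le> r"
  shows "Phi r m l 0 = int (ff r (2*m) * ff l (2*m))"
proof -
  have "Phi r m l 0 = (\<Sum>j<2*m. (-1)^j * int (2*m choose j) * (int (Aco r m j l) * int (Aco r m (2*m-j) 0)))
      + (-1)^(2*m) * int (2*m choose (2*m)) * (int (Aco r m (2*m) l) * int (Aco r m (2*m-2*m) 0))"
    unfolding Phi_def by (rule sum_atMost_last)
  also have "(\<Sum>j<2*m. (-1)^j * int (2*m choose j) * (int (Aco r m j l) * int (Aco r m (2*m-j) 0))) = 0"
    by (intro sum.neutral) (auto simp: Aco_def ff_zero)
  finally show ?thesis by (simp add: Aco_def)
qed

definition Eexp :: "nat \<Rightarrow> nat" where "Eexp l = 2^l - 1"

lemma two_pow_sum_le: "1 \<le> x \<Longrightarrow> 1 \<le> y \<Longrightarrow> (2::nat)^x + 2^y \<le> 2^(x+y)"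
proof -
  assume "1 \<le> x" "1 \<le> y"
  then have a: "(2::nat) \<le> 2^x" "(2::nat) \<le> 2^y"
    by (metis power_increasing_iff one_less_numeral_iff power_one_right semiring_norm(76))+
  define p q where "p = (2::nat)^x" and "q = (2::nat)^y"
  have "p + q \<le> p * q"
  proof -
    obtain p' q' where pq: "p = p' + 2" "q = q' + 2" using a unfolding p_def q_def
      by (metis le_add_diff_inverse2)
    show ?thesis unfolding pq by (simp add: algebra_simps)
  qed
  then show ?thesis unfolding p_def q_def by (simp add: power_add)
qed


lemma Eexp_split:
  assumes "i < l - 1"
  shows "(Eexp l - 1 - Eexp (Suc i) - Eexp (l - Suc i)) + Eexp (Suc i) + Eexp (l - Suc i) = Eexp l - 1"
proof -
  have e: "Suc i + (l - Suc i) = l" using assms by simp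
  have "(2::nat)^(Suc i) + 2^(l - Suc i) \<le> 2^(Suc i + (l - Suc i))"
    by (rule two_pow_sum_le) (use assms in auto)
  then have le: "(2::nat)^(Suc i) + 2^(l - Suc i) \<le> 2^l" unfolding e .
  have p: "(1::nat) \<le> 2^(Suc i)" "(1::nat) \<le> 2^(l - Suc i)" by (rule one_le_power, simp)+
  define X Y Z where "X = (2::nat)^(Suc i)" and "Y = (2::nat)^(l - Suc i)" and "Z = (2::nat)^l"
  have "(Z - 1 - 1 - (X - 1) - (Y - 1)) + (X - 1) + (Y - 1) = Z - 1 - 1"
    using le p unfolding X_def[symmetric] Y_def[symmetric] Z_def[symmetric] by linarith
  then show ?thesis unfolding Eexp_def X_def Y_def Z_def .
qed

lemma Good:
  assumes m: "1 \<le> m" "2*m \<le> r"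
  shows "l \<le> r \<Longrightarrow> Gd r m s (Eexp l + 1) (\<lambda>a. phi r s a 0 ^ Eexp l * phi r s a l)"
proof (induction l rule: less_induct)
  case (less l)
  show ?case
  proof (cases "l < 2*m")
    case True
    from Gd_mult[OF Gd_L0pow[of m r s "Eexp l"] Gd_L[OF True]] show ?thesis using m by simp
  next
    case False
    then have l: "2*m \<le> l" by simp
    have l2: "2 \<le> l" using m l by simp
    have lr: "l \<le> r" by (rule less.prems)
    define c where "c = ff r (2*m) * ff l (2*m)"
    have cpos: "0 < c" using ff_pos[of "2*m" r] ff_pos[of "2*m" l] l m unfolding c_def by simp
    have "(2::nat)^2 \<le> 2^l" using l2 by (intro power_increasing) auto
    then have Eg: "1 \<le> Eexp l" unfolding Eexp_def by simp
    define ex where "ex i = Eexp l - 1 - Eexp (Suc i) - Eexp (l - Suc i)" for i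
    define G where "G j a = phi r s a 0 ^ Eexp j * phi r s a j" for j a
    define F where "F i a = of_int (Phi r m (Suc i) (l - Suc i)) * ((phi r s a 0 ^ ex i * G (Suc i) a) * G (l - Suc i) a)" for i a
    have GF: "Gd r m s (Eexp l + 1) (F i)" if i: "i < l - 1" for i
    proof -
      have g1: "Gd r m s (Eexp (Suc i) + 1) (G (Suc i))" unfolding G_def using less.IH i lr by auto
      have g2: "Gd r m s (Eexp (l - Suc i) + 1) (G (l - Suc i))" unfolding G_def using less.IH i lr by auto
      have "Gd r m s (ex i + (Eexp (Suc i) + 1) + (Eexp (l - Suc i) + 1)) (\<lambda>a. (phi r s a 0 ^ ex i * G (Suc i) a) * G (l - Suc i) a)"
        by (intro Gd_mult g1 g2 Gd_L0pow) (use m in simp)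
      moreover have "ex i + (Eexp (Suc i) + 1) + (Eexp (l - Suc i) + 1) = Eexp l + 1"
        using Eexp_split[OF i] Eg unfolding ex_def by linarith
      ultimately show ?thesis unfolding F_def by (intro Gd_scale) simp
    qed
    have "Gd r m s (Eexp l + 1) (\<lambda>a. (- 1 / (2 * of_nat c)) * (\<Sum>i<l-1. F i a))"
      by (intro Gd_scale Gd_sum) (use GF in auto)
    moreover have "\<forall>a\<in>Mcone r m. (- 1 / (2 * of_nat c)) * (\<Sum>i<l-1. F i a) = phi r s a 0 ^ Eexp l * phi r s a l"
    proof
      fix a assume a: "a \<in> Mcone r m"
      define b where "b = phi r s a"
      define T where "T i = of_int (Phi r m i (l - i)) * b i * b (l - i)" for i
      have "transv r m b (l - 2*m) = 0" unfolding b_def using invariance[OF a] lr l by simp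
      then have "(\<Sum>i\<le>l. T i) = 0" unfolding T_def using transv_single[OF lr l] by simp
      moreover have "(\<Sum>i\<le>l. T i) = T 0 + (\<Sum>i<l-1. T (Suc i)) + T l"
      proof -
        have "(\<Sum>i\<le>l. T i) = T 0 + (\<Sum>i<l. T (Suc i))" by (rule sum_atMost_first)
        moreover have "(\<Sum>i<l. T (Suc i)) = (\<Sum>i<l-1. T (Suc i)) + T l"
        proof -
          obtain l' where "l = Suc l'" using l2 by (cases l) auto
          then show ?thesis by simp
        qed
        ultimately show ?thesis by (simp add: add.assoc)
      qed
      moreover have "T 0 = of_nat c * b 0 * b l" "T l = of_nat c * b 0 * b l"
        unfolding T_def c_def using Phi_0l[OF l lr] Phi_l0[OF l lr] by (simp_all add: mult_ac)
      ultimately have "2 * of_nat c * b 0 * b l + (\<Sum>i<l-1. T (Suc i)) = 0"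
        by (simp add: algebra_simps)
      then have rel: "2 * of_nat c * b 0 * b l = - (\<Sum>i<l-1. T (Suc i))"
        by (simp add: eq_neg_iff_add_eq_0)
      have FT: "F i a = b 0 ^ (Eexp l - 1) * T (Suc i)" if i: "i < l - 1" for i
      proof -
        have e: "Eexp l - 1 = ex i + Eexp (Suc i) + Eexp (l - Suc i)"
          using Eexp_split[OF i] unfolding ex_def by simp
        have "b 0 ^ (Eexp l - 1) = b 0 ^ ex i * b 0 ^ Eexp (Suc i) * b 0 ^ Eexp (l - Suc i)"
          unfolding e by (simp only: power_add)
        then show ?thesis unfolding F_def T_def G_def b_def by (simp add: mult_ac)
      qed
      have S: "(\<Sum>i<l-1. T (Suc i)) = - (2 * of_nat c * b 0 * b l)" using rel by simp
      have "(\<Sum>i<l-1. F i a) = b 0 ^ (Eexp l - 1) * (\<Sum>i<l-1. T (Suc i))"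
        unfolding sum_distrib_left by (intro sum.cong refl) (simp add: FT)
      also have "\<dots> = - (2 * of_nat c) * ((b 0 ^ (Eexp l - 1) * b 0) * b l)"
        unfolding S by (simp only: mult_minus_right mult_minus_left mult_ac)
      also have "b 0 ^ (Eexp l - 1) * b 0 = b 0 ^ Eexp l"
      proof -
        have e: "Eexp l = Suc (Eexp l - 1)" using Eg by simp
        show ?thesis by (subst (2) e) (rule power_Suc2[symmetric])
      qed
      finally have S2: "(\<Sum>i<l-1. F i a) = - (2 * of_nat c) * (b 0 ^ Eexp l * b l)" .
      have nz: "(2 * of_nat c :: complex) \<noteq> 0" using cpos by simp
      have one: "(- 1 / (2 * of_nat c)) * (- (2 * of_nat c)) = (1::complex)" using nz by simp
      have "(- 1 / (2 * of_nat c)) * (\<Sum>i<l-1. F i a) = ((- 1 / (2 * of_nat c)) * (- (2 * of_nat c))) * (b 0 ^ Eexp l * b l)"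
        unfolding S2 by (simp only: mult.assoc)
      also have "\<dots> = b 0 ^ Eexp l * b l" unfolding one by simp
      finally show "(- 1 / (2 * of_nat c)) * (\<Sum>i<l-1. F i a) = phi r s a 0 ^ Eexp l * phi r s a l"
        unfolding b_def .
    qed
    ultimately show ?thesis by (rule Gd_cong)
  qed
qed

lemma Eexp_mono: "u \<le> r \<Longrightarrow> Eexp u \<le> Eexp r"
  unfolding Eexp_def by (simp add: diff_le_mono)

lemma phi_split:
  assumes "u \<le> r"
  shows "phi r s a u = a u + (\<Sum>i\<in>{Suc u..r}. of_nat (i choose u) * s ^ (i - u) * a i)"
proof -
  have "phi r s a u = (\<Sum>i\<in>{u..r}. of_nat (i choose u) * s ^ (i - u) * a i)"
    unfolding phi_def by (rule sum.mono_neutral_right) auto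
  also have "{u..r} = insert u {Suc u..r}" using assms by auto
  finally show ?thesis by simp
qed

lemma coordGd:
  assumes m: "1 \<le> m" "2*m \<le> r"
  shows "u \<le> r \<Longrightarrow> Gd r m s (Eexp r + 1) (\<lambda>a. phi r s a 0 ^ Eexp r * a u)"
proof (induction "r - u" arbitrary: u rule: less_induct)
  case less
  have u: "u \<le> r" by (rule less.prems)
  have h1: "Gd r m s (Eexp r + 1) (\<lambda>a. phi r s a 0 ^ Eexp r * phi r s a u)"
  proof -
    have "Gd r m s ((Eexp r - Eexp u) + (Eexp u + 1)) (\<lambda>a. phi r s a 0 ^ (Eexp r - Eexp u) * (phi r s a 0 ^ Eexp u * phi r s a u))"
      by (intro Gd_mult Gd_L0pow Good[OF m u]) (use m in simp)
    moreover have "(Eexp r - Eexp u) + (Eexp u + 1) = Eexp r + 1" using Eexp_mono[OF u] by simp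
    moreover have "phi r s a 0 ^ (Eexp r - Eexp u) * (phi r s a 0 ^ Eexp u * phi r s a u) = phi r s a 0 ^ Eexp r * phi r s a u" for a
      using Eexp_mono[OF u] by (simp add: mult.assoc[symmetric] power_add[symmetric])
    ultimately show ?thesis by simp
  qed
  have h2: "Gd r m s (Eexp r + 1) (\<lambda>a. \<Sum>i\<in>{Suc u..r}. of_nat (i choose u) * s ^ (i - u) * (phi r s a 0 ^ Eexp r * a i))"
  proof (rule Gd_sum)
    fix i assume "i \<in> {Suc u..r}"
    then have "r - i < r - u" "i \<le> r" by auto
    then have "Gd r m s (Eexp r + 1) (\<lambda>a. phi r s a 0 ^ Eexp r * a i)" using less.hyps by blast
    from Gd_scale[OF this, of "of_nat (i choose u) * s ^ (i - u)"]
    show "Gd r m s (Eexp r + 1) (\<lambda>a. of_nat (i choose u) * s ^ (i - u) * (phi r s a 0 ^ Eexp r * a i))"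
      by (simp add: mult.assoc)
  qed simp
  have "Gd r m s (Eexp r + 1) (\<lambda>a. phi r s a 0 ^ Eexp r * phi r s a u + (-1) *
      (\<Sum>i\<in>{Suc u..r}. of_nat (i choose u) * s ^ (i - u) * (phi r s a 0 ^ Eexp r * a i)))"
    by (intro Gd_add h1 Gd_scale h2)
  moreover have "phi r s a 0 ^ Eexp r * phi r s a u + (-1) *
      (\<Sum>i\<in>{Suc u..r}. of_nat (i choose u) * s ^ (i - u) * (phi r s a 0 ^ Eexp r * a i))
      = phi r s a 0 ^ Eexp r * a u" for a
    unfolding phi_split[OF u, of s a] by (simp add: algebra_simps sum_distrib_left sum_negf)
  ultimately show ?case by simp
qed

lemma transfer:
  assumes m: "1 \<le> m" "2*m \<le> r"
  shows "f \<in> gpoly CV t \<Longrightarrow> Gd r m s (t * (Eexp r + 1)) (\<lambda>a. phi r s a 0 ^ (t * Eexp r) * f a)"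
proof (induction rule: gpoly_induct)
  case (gc c t)
  have "Gd r m s (t * Eexp r) (\<lambda>a. phi r s a 0 ^ (t * Eexp r))" by (rule Gd_L0pow) (use m in simp)
  from Gd_mono[OF Gd_scale[OF this, of c]] show ?case by (simp add: mult.commute)
next
  case (gadd f t g)
  then have "Gd r m s (t * (Eexp r + 1)) (\<lambda>a. phi r s a 0 ^ (t * Eexp r) * f a)"
    "Gd r m s (t * (Eexp r + 1)) (\<lambda>a. phi r s a 0 ^ (t * Eexp r) * g a)" by auto
  from Gd_add[OF this] show ?case by (simp add: distrib_left)
next
  case (gmul v f t)
  from gmul(1) obtain i where v: "v = (\<lambda>a. a i)" unfolding CV_def by auto
  have hv: "Gd r m s (Eexp r + 1) (\<lambda>a. phi r s a 0 ^ Eexp r * v a)"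
  proof (cases "i \<le> r")
    case True then show ?thesis unfolding v using coordGd[OF m] by blast
  next
    case False
    have "\<forall>a\<in>Mcone r m. 0 = phi r s a 0 ^ Eexp r * v a"
      using False unfolding v Mcone_def bform_space_def by auto
    with Gd_const show ?thesis by (rule Gd_cong)
  qed
  have hf: "Gd r m s (t * (Eexp r + 1)) (\<lambda>a. phi r s a 0 ^ (t * Eexp r) * f a)" using gmul by auto
  have "Gd r m s (Eexp r + 1 + t * (Eexp r + 1)) (\<lambda>a. phi r s a 0 ^ Eexp r * v a * (phi r s a 0 ^ (t * Eexp r) * f a))"
    by (rule Gd_mult[OF hv hf])
  moreover have "Eexp r + 1 + t * (Eexp r + 1) = Suc t * (Eexp r + 1)" by simp
  ultimately have G: "Gd r m s (Suc t * (Eexp r + 1)) (\<lambda>a. phi r s a 0 ^ Eexp r * v a * (phi r s a 0 ^ (t * Eexp r) * f a))"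
    by (simp only:)
  have "\<forall>a\<in>Mcone r m. phi r s a 0 ^ Eexp r * v a * (phi r s a 0 ^ (t * Eexp r) * f a) = phi r s a 0 ^ (Suc t * Eexp r) * (v a * f a)"
    by (simp add: power_add mult_ac)
  from Gd_cong[OF G this] show ?case .
next
  case (gmono f t)
  have hf: "Gd r m s (t * (Eexp r + 1)) (\<lambda>a. phi r s a 0 ^ (t * Eexp r) * f a)" using gmono by auto
  have "Gd r m s (Eexp r + t * (Eexp r + 1)) (\<lambda>a. phi r s a 0 ^ Eexp r * (phi r s a 0 ^ (t * Eexp r) * f a))"
    by (intro Gd_mult Gd_L0pow hf) (use m in simp)
  moreover have "phi r s a 0 ^ Eexp r * (phi r s a 0 ^ (t * Eexp r) * f a) = phi r s a 0 ^ (Suc t * Eexp r) * f a" for a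
    by (simp add: power_add mult_ac)
  ultimately show ?case by (auto intro: Gd_mono)
qed

definition ExpS :: "nat \<Rightarrow> nat \<Rightarrow> (nat \<Rightarrow> nat) set" where
  "ExpS M D = PiE {..<M} (\<lambda>_. {..D})"

definition monoL :: "(nat \<Rightarrow> (nat\<Rightarrow>complex)\<Rightarrow>complex) \<Rightarrow> nat \<Rightarrow> (nat \<Rightarrow> nat) \<Rightarrow> (nat\<Rightarrow>complex) \<Rightarrow> complex" where
  "monoL Lf M \<alpha> a = (\<Prod>u<M. Lf u a ^ \<alpha> u)"

lemma Ex_finite: "finite (ExpS M D)"
  unfolding ExpS_def by (intro finite_PiE) auto

lemma Ex_card: "card (ExpS M D) = (Suc D) ^ M"
  unfolding ExpS_def by (simp add: card_PiE)

lemma Ex_mono: "ExpS M t \<subseteq> ExpS M (Suc t)"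
  unfolding ExpS_def by (intro PiE_mono) auto

lemma gpoly_monos:
  "f \<in> gpoly ((\<lambda>u. Lf u) ` {..<M}) D \<Longrightarrow> \<exists>c. \<forall>a. f a = (\<Sum>\<alpha>\<in>ExpS M D. c \<alpha> * monoL Lf M \<alpha> a)"
proof (induction rule: gpoly_induct)
  case (gc c t)
  define z where "z = restrict (\<lambda>_. 0::nat) {..<M}"
  have z: "z \<in> ExpS M t" unfolding z_def ExpS_def by auto
  have mz: "monoL Lf M z a = 1" for a unfolding monoL_def z_def by simp
  show ?case
  proof (intro exI allI)
    fix a
    have "(\<Sum>\<alpha>\<in>ExpS M t. (if \<alpha> = z then c else 0) * monoL Lf M \<alpha> a) = (\<Sum>\<alpha>\<in>ExpS M t. if \<alpha> = z then c * monoL Lf M \<alpha> a else 0)"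
      by (intro sum.cong refl) auto
    also have "\<dots> = c" using z Ex_finite by (simp add: mz)
    finally show "c = (\<Sum>\<alpha>\<in>ExpS M t. (if \<alpha> = z then c else 0) * monoL Lf M \<alpha> a)" by simp
  qed
next
  case (gadd f t g)
  then obtain c1 c2 where "\<forall>a. f a = (\<Sum>\<alpha>\<in>ExpS M t. c1 \<alpha> * monoL Lf M \<alpha> a)"
    "\<forall>a. g a = (\<Sum>\<alpha>\<in>ExpS M t. c2 \<alpha> * monoL Lf M \<alpha> a)" by blast
  then show ?case
    by (intro exI[of _ "\<lambda>\<alpha>. c1 \<alpha> + c2 \<alpha>"]) (simp add: distrib_right sum.distrib)
next
  case (gmul v f t)
  from gmul(1) obtain w where w: "w < M" "v = Lf w" by auto
  from gmul obtain c where c: "\<forall>a. f a = (\<Sum>\<alpha>\<in>ExpS M t. c \<alpha> * monoL Lf M \<alpha> a)" by blast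
  define sh where "sh \<alpha> = \<alpha>(w := Suc (\<alpha> w))" for \<alpha> :: "nat \<Rightarrow> nat"
  have inj: "inj_on sh (ExpS M t)"
  proof (rule inj_onI)
    fix x y assume xy: "sh x = sh y"
    show "x = y"
    proof (rule ext)
      fix u
      have "sh x u = sh y u" using xy by simp
      then show "x u = y u" unfolding sh_def by (cases "u = w") auto
    qed
  qed
  have shE: "sh ` ExpS M t \<subseteq> ExpS M (Suc t)"
  proof
    fix \<beta> assume "\<beta> \<in> sh ` ExpS M t"
    then obtain \<alpha> where \<alpha>: "\<alpha> \<in> ExpS M t" "\<beta> = sh \<alpha>" by blast
    have a1: "\<And>u. u < M \<Longrightarrow> \<alpha> u \<le> t" using \<alpha>(1) unfolding ExpS_def by auto
    have a2: "\<And>u. \<not> u < M \<Longrightarrow> \<alpha> u = undefined" using \<alpha>(1) unfolding ExpS_def by auto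
    show "\<beta> \<in> ExpS M (Suc t)" unfolding ExpS_def \<alpha>(2)
    proof (rule PiE_I)
      fix u assume "u \<in> {..<M}"
      then have "\<alpha> u \<le> t" using a1 by simp
      then show "sh \<alpha> u \<in> {..Suc t}" unfolding sh_def by (cases "u = w") auto
    next
      fix u assume "u \<notin> {..<M}"
      then show "sh \<alpha> u = undefined" using a2 w(1) unfolding sh_def by (cases "u = w") auto
    qed
  qed
  have msh: "monoL Lf M (sh \<alpha>) a = Lf w a * monoL Lf M \<alpha> a" for \<alpha> a
  proof -
    have wM: "w \<in> {..<M}" using w(1) by simp
    have "monoL Lf M (sh \<alpha>) a = Lf w a ^ sh \<alpha> w * (\<Prod>u\<in>{..<M} - {w}. Lf u a ^ sh \<alpha> u)"
      unfolding monoL_def by (rule prod.remove[OF finite_lessThan wM])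
    also have "sh \<alpha> w = Suc (\<alpha> w)" unfolding sh_def by simp
    also have "(\<Prod>u\<in>{..<M} - {w}. Lf u a ^ sh \<alpha> u) = (\<Prod>u\<in>{..<M} - {w}. Lf u a ^ \<alpha> u)"
      by (intro prod.cong refl) (auto simp: sh_def)
    also have "Lf w a ^ Suc (\<alpha> w) * (\<Prod>u\<in>{..<M} - {w}. Lf u a ^ \<alpha> u) = Lf w a * monoL Lf M \<alpha> a"
      unfolding monoL_def prod.remove[OF finite_lessThan wM, of "\<lambda>u. Lf u a ^ \<alpha> u"] by simp
    finally show ?thesis .
  qed
  define c' where "c' \<beta> = (if \<beta> \<in> sh ` ExpS M t then c (inv_into (ExpS M t) sh \<beta>) else 0)" for \<beta>
  show ?case
  proof (intro exI allI)
    fix a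
    have "(\<Sum>\<beta>\<in>ExpS M (Suc t). c' \<beta> * monoL Lf M \<beta> a) = (\<Sum>\<beta>\<in>sh ` ExpS M t. c' \<beta> * monoL Lf M \<beta> a)"
      using shE Ex_finite by (intro sum.mono_neutral_right) (auto simp: c'_def)
    also have "\<dots> = (\<Sum>\<alpha>\<in>ExpS M t. c' (sh \<alpha>) * monoL Lf M (sh \<alpha>) a)"
      by (rule sum.reindex[OF inj, unfolded comp_def])
    also have "\<dots> = (\<Sum>\<alpha>\<in>ExpS M t. Lf w a * (c \<alpha> * monoL Lf M \<alpha> a))"
      by (intro sum.cong refl) (auto simp: c'_def inv_into_f_f[OF inj] msh)
    also have "\<dots> = v a * f a" using c w by (simp add: sum_distrib_left)
    finally show "v a * f a = (\<Sum>\<beta>\<in>ExpS M (Suc t). c' \<beta> * monoL Lf M \<beta> a)" by simp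
  qed
next
  case (gmono f t)
  then obtain c where c: "\<forall>a. f a = (\<Sum>\<alpha>\<in>ExpS M t. c \<alpha> * monoL Lf M \<alpha> a)" by blast
  show ?case
  proof (intro exI allI)
    fix a
    have "(\<Sum>\<alpha>\<in>ExpS M (Suc t). (if \<alpha> \<in> ExpS M t then c \<alpha> else 0) * monoL Lf M \<alpha> a) = (\<Sum>\<alpha>\<in>ExpS M t. c \<alpha> * monoL Lf M \<alpha> a)"
      using Ex_mono Ex_finite by (intro sum.mono_neutral_cong_right) auto
    then show "f a = (\<Sum>\<alpha>\<in>ExpS M (Suc t). (if \<alpha> \<in> ExpS M t then c \<alpha> else 0) * monoL Lf M \<alpha> a)" using c by simp
  qed
qed

lemma L_gpoly: "(\<lambda>a. phi r s a u) \<in> gpoly CV 1"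
  unfolding phi_def
proof (rule gpoly_sum)
  fix i
  have "(\<lambda>a. a i) \<in> gpoly CV 1" by (rule gpoly_var) (auto simp: CV_def)
  from gpoly_scale[OF this, of "of_nat (i choose u) * s ^ (i - u)"]
  show "(\<lambda>a. of_nat (i choose u) * s ^ (i - u) * a i) \<in> gpoly CV 1" .
qed simp

lemma Hge_upper:
  assumes m: "1 \<le> m" "2*m \<le> r" and Z: "zar_irred r Z" and ZM: "Z \<subseteq> Mcone r m"
    and H: "Hge Z t n"
  shows "n \<le> (t * (Eexp r + 1) + 1) ^ (2*m)"
proof -
  from H obtain h where h: "\<forall>j<n. h j \<in> gpoly CV t" "indep_on Z h n" unfolding Hge_def by blast
  show ?thesis
  proof (cases "\<exists>a0\<in>Z. a0 \<noteq> (\<lambda>_. 0)")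
    case False
    have "n \<le> card {()}"
    proof (rule LA_bound[of "{()}" n Z h "\<lambda>_ _. 1"])
      show "\<forall>j<n. \<exists>c. \<forall>x\<in>Z. h j x = (\<Sum>i\<in>{()}. c i * 1)"
      proof (intro allI impI exI ballI)
        fix j x assume "x \<in> Z"
        then have "x = (\<lambda>_. 0)" using False by blast
        then show "h j x = (\<Sum>i\<in>{()}. h j (\<lambda>_. 0) * 1)" by simp
      qed
      show "\<forall>d. (\<forall>x\<in>Z. (\<Sum>j<n. d j * h j x) = 0) \<longrightarrow> (\<forall>j<n. d j = 0)"
        using h(2) unfolding indep_on_def .
    qed simp
    also have "\<dots> \<le> (t * (Eexp r + 1) + 1) ^ (2*m)" by simp
    finally show ?thesis .
  next
    case True
    then obtain a0 where a0: "a0 \<in> Z" "a0 \<noteq> (\<lambda>_. 0)" by blast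
    have "a0 \<in> bform_space r" using a0 ZM unfolding Mcone_def by auto
    from exists_nonroot[OF this a0(2)] obtain s where s: "phi r s a0 0 \<noteq> 0" by blast
    define D where "D = t * (Eexp r + 1)"
    define N where "N = t * Eexp r"
    define Hf where "Hf j a = phi r s a 0 ^ N * h j a" for j a
    have rep: "\<forall>j<n. \<exists>c. \<forall>x\<in>Z. Hf j x = (\<Sum>\<alpha>\<in>ExpS (2*m) D. c \<alpha> * monoL (\<lambda>u a. phi r s a u) (2*m) \<alpha> x)"
    proof (intro allI impI)
      fix j assume j: "j < n"
      have "Gd r m s D (Hf j)" unfolding D_def Hf_def N_def using transfer[OF m] h(1) j by blast
      then obtain g where g: "g \<in> gpoly (TV r m s) D" "\<forall>a\<in>Mcone r m. Hf j a = g a" unfolding Gd_def by blast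
      have "g \<in> gpoly ((\<lambda>u. (\<lambda>a. phi r s a u)) ` {..<2*m}) D" using g(1) unfolding TV_def .
      from gpoly_monos[OF this] obtain c where c: "\<forall>a. g a = (\<Sum>\<alpha>\<in>ExpS (2*m) D. c \<alpha> * monoL (\<lambda>u a. phi r s a u) (2*m) \<alpha> a)"
        by blast
      show "\<exists>c. \<forall>x\<in>Z. Hf j x = (\<Sum>\<alpha>\<in>ExpS (2*m) D. c \<alpha> * monoL (\<lambda>u a. phi r s a u) (2*m) \<alpha> x)"
        using g(2) c ZM by (intro exI[of _ c]) auto
    qed
    have ind: "\<forall>d. (\<forall>x\<in>Z. (\<Sum>j<n. d j * Hf j x) = 0) \<longrightarrow> (\<forall>j<n. d j = 0)"
    proof (rule allI, rule impI)
      fix d assume d: "\<forall>x\<in>Z. (\<Sum>j<n. d j * Hf j x) = 0"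
      have fp: "(\<lambda>a. phi r s a 0 ^ N) \<in> poly_fun"
        using gpoly_poly_fun[OF gpoly_pow[OF L_gpoly[of r s 0], of N]] .
      have "\<forall>j<n. (\<lambda>a. d j * h j a) \<in> gpoly CV t" using h(1) gpoly_scale by blast
      then have "(\<lambda>a. \<Sum>j\<in>{..<n}. d j * h j a) \<in> gpoly CV t" by (intro gpoly_sum) auto
      then have gp: "(\<lambda>a. \<Sum>j<n. d j * h j a) \<in> poly_fun" by (rule gpoly_poly_fun)
      have fg: "\<forall>x\<in>Z. phi r s x 0 ^ N * (\<Sum>j<n. d j * h j x) = 0"
        using d unfolding Hf_def by (simp add: sum_distrib_left mult_ac)
      have nf: "\<exists>x\<in>Z. phi r s x 0 ^ N \<noteq> 0" using a0 s by auto
      have "\<forall>x\<in>Z. (\<Sum>j<n. d j * h j x) = 0" by (rule irred_cancel[OF Z fp gp fg nf])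
      then show "\<forall>j<n. d j = 0" using h(2) unfolding indep_on_def by blast
    qed
    have "n \<le> card (ExpS (2*m) D)" by (rule LA_bound[OF Ex_finite rep ind])
    then show ?thesis unfolding Ex_card D_def by simp
  qed
qed

lemma chain_le:
  assumes m: "1 \<le> m" "2*m \<le> r" and ch: "irred_chain r (Mcone r m) k"
  shows "k \<le> 2*m"
proof (rule ccontr)
  assume kk: "\<not> k \<le> 2*m"
  from ch obtain Z where Z: "\<forall>i\<le>k. zar_irred r (Z i) \<and> Z i \<subseteq> Mcone r m" "\<forall>i<k. Z i \<subset> Z (Suc i)"
    unfolding irred_chain_def by blast
  from chain_growth[of k r Z k] Z obtain E where E: "\<forall>E'\<ge>E. \<forall>q. Hge (Z k) (q*E') ((q+k) choose k)" by auto
  define A where "A = E * (Eexp r + 1)"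
  have bound: "((q+k) choose k) \<le> (q * A + 1) ^ (2*m)" for q
  proof -
    have "Hge (Z k) (q*E) ((q+k) choose k)" using E by blast
    from Hge_upper[OF m _ _ this] Z show ?thesis unfolding A_def by (simp add: algebra_simps)
  qed
  define K where "K = 2*m"
  define B where "B = (A * k + 1) ^ K"
  define q where "q = k * B"
  have kpos: "0 < k" using kk by simp
  have "real (q + k) / real k = real (B + 1)"
    unfolding q_def using kpos by (simp add: field_simps)
  then have "real (B + 1) ^ k = (real (q + k) / real k) ^ k" by simp
  also have "\<dots> \<le> real ((q + k) choose k)" by (rule binomial_ge_n_over_k_pow_k) simp
  finally have lo: "(B + 1) ^ k \<le> (q + k) choose k" by (simp only: of_nat_power[symmetric] of_nat_le_iff)
  have "(B + 1) ^ Suc K \<le> (B + 1) ^ k" using kk unfolding K_def by (intro power_increasing) auto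
  also note lo
  also have "(q + k) choose k \<le> (q * A + 1) ^ K" using bound unfolding K_def .
  also have "q * A + 1 \<le> (A * k + 1) * (B + 1)" unfolding q_def by (simp add: algebra_simps)
  then have "(q * A + 1) ^ K \<le> ((A * k + 1) * (B + 1)) ^ K" by (rule power_mono) simp
  also have "\<dots> = (A * k + 1) ^ K * (B + 1) ^ K" by (rule power_mult_distrib)
  also have "(A * k + 1) ^ K = B" unfolding B_def ..
  finally have "(B + 1) * (B + 1) ^ K \<le> B * (B + 1) ^ K" by simp
  moreover have "0 < (B + 1) ^ K" by simp
  ultimately show False by simp
qed

lemma Mcone0_zero:
  assumes a: "a \<in> Mcone r 0"
  shows "a = (\<lambda>_. 0)"
proof (rule ccontr)
  assume nz: "a \<noteq> (\<lambda>_. 0)"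
  have ab: "a \<in> bform_space r" using a unfolding Mcone_def by auto
  from exists_nonroot[OF ab nz] obtain s where s: "phi r s a 0 \<noteq> 0" by blast
  have "transv r 0 (phi r s a) 0 = 0" using invariance[OF a, of 0 s] by simp
  moreover have "transv r 0 (phi r s a) (0 - 2*0) = (\<Sum>i\<le>0. of_int (Phi r 0 i (0 - i)) * phi r s a i * phi r s a (0 - i))"
    by (rule transv_single) auto
  moreover have "Phi r 0 0 0 = 1" using Phi_0l[of 0 0 r] by (simp add: ff_def)
  ultimately have "phi r s a 0 * phi r s a 0 = 0" by simp
  with s show False by simp
qed

lemma chain_all:
  assumes m: "2*m \<le> r" and ch: "irred_chain r (Mcone r m) k"
  shows "k \<le> 2*m"
proof (cases "1 \<le> m")
  case True show ?thesis using chain_le[OF True m ch] .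
next
  case False
  then have m0: "m = 0" by simp
  show ?thesis
  proof (rule ccontr)
    assume "\<not> k \<le> 2*m"
    then have k: "0 < k" by simp
    from ch obtain Z where Z: "\<forall>i\<le>k. zar_irred r (Z i) \<and> Z i \<subseteq> Mcone r m" "\<forall>i<k. Z i \<subset> Z (Suc i)"
      unfolding irred_chain_def by blast
    have sub: "Z 0 \<subset> Z 1" using Z(2) k by simp
    have "Z 1 \<subseteq> Mcone r 0" using Z(1) k m0 by auto
    then have z1: "Z 1 \<subseteq> {\<lambda>_. 0}" using Mcone0_zero by blast
    have "Z 0 \<noteq> {}" using Z(1) unfolding zar_irred_def by auto
    with sub z1 show False by blast
  qed
qed

theorem mainTheorem7:
  fixes r m :: nat
  assumes "r \<ge> 2" and "2 * m \<le> r"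
  shows "proj_dim r (Mcone r m) < ereal (real (2 * m)) \<and> (m = 0 \<longrightarrow> Mpts r m = {})"
proof
  have "proj_dim r (Mcone r m) \<le> ereal (real (2 * m) - 1)"
    unfolding proj_dim_def
  proof (rule Sup_least)
    fix x assume "x \<in> {-1} \<union> {ereal (real k) - 1 | k. irred_chain r (Mcone r m) k}"
    then show "x \<le> ereal (real (2 * m) - 1)"
    proof
      assume "x \<in> {-1}"
      then have x: "x = - ereal 1" by (simp add: one_ereal_def)
      have "- 1 \<le> 2 * real m - 1" by simp
      then show ?thesis unfolding x by simp
    next
      assume "x \<in> {ereal (real k) - 1 | k. irred_chain r (Mcone r m) k}"
      then obtain k where k: "x = ereal (real k) - 1" "irred_chain r (Mcone r m) k" by blast
      have "k \<le> 2*m" by (rule chain_all[OF assms(2) k(2)])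
      then show ?thesis unfolding k(1) by (simp add: one_ereal_def)
    qed
  qed
  also have "\<dots> < ereal (real (2 * m))" by simp
  finally show "proj_dim r (Mcone r m) < ereal (real (2 * m))" .
next
  show "m = 0 \<longrightarrow> Mpts r m = {}"
    using Mcone0_zero unfolding Mpts_def by blast
qed


end
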